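(* Let $P\in\mathfrak N_2$ and let $R$ be a retract of $P$ of width three which is a tower of nice sections. If $S$ is an ordinal summand of $R$ (in its decomposition into nice sections) which is a nice section of width three, then $S=P(k\to\ell)$ for some level indices $k<\ell$ of $P$.
   Context: All posets are finite; $h_P$ is the height; level sets $P(0)=\min P$, $P(k+1)=\min(P\setminus\bigcup_{i\le k}P(i))$; $P(k\to\ell)=\bigcup_{i=k}^\ell P(i)$ as induced subposet; $A<B$ means $a<b$ for all $a\in A,b\in B$. A retract is the image of an idempotent order-preserving self-map. A section is either a 2-element antichain or a poset $P$ of height $h_P\ge1$ with carrier $\{c_{k,j}:k\in[0,h_P],j\in\{0,1,2\}\}$ such that: $c_{0,j}<\dots<c_{h_P,j}$ for each $j$; each $\{c_{k,0},c_{k,1},c_{k,2}\}$ is an antichain; $c_{k,i}<c_{\ell,j}\Rightarrow c_{k,i+1}<c_{\ell,j+1}$ (indices mod 3); and for no $k$ is $P(k)<P(k+1)$ (the latter kind is a section of width three). A section is nice if for all $x<y$: $\{z:z>x\}\not\subseteq\{z:z\ge y\}$ and $\{z:z<y\}\not\subseteq\{z:z\le x\}$. A tower of nice sections is an ordinal sum of nice sections (the decomposition is unique). $\mathfrak N_2$ is the class of nice sections of width three of height $\ge2$ with horizon 2, i.e. $P(k)<P(\ell)$ whenever $\ell\ge k+2$. *)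

theory Defs
  imports Main
begin

text \<open>A finite poset is represented by a carrier set A and a relation le, considered
only on A. All notions below are relative to the carrier, so a subset B of A with the
same relation le is the induced subposet on B.\<close>

definition poset :: "'a set \<Rightarrow> ('a \<Rightarrow> 'a \<Rightarrow> bool) \<Rightarrow> bool" where
  "poset A le \<longleftrightarrow> (\<forall>x\<in>A. le x x) \<and> (\<forall>x\<in>A. \<forall>y\<in>A. le x y \<and> le y x \<longrightarrow> x = y)
     \<and> (\<forall>x\<in>A. \<forall>y\<in>A. \<forall>z\<in>A. le x y \<and> le y z \<longrightarrow> le x z)"

definition lt :: "('a \<Rightarrow> 'a \<Rightarrow> bool) \<Rightarrow> 'a \<Rightarrow> 'a \<Rightarrow> bool" where
  "lt le x y \<longleftrightarrow> le x y \<and> x \<noteq> y"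

definition set_lt :: "('a \<Rightarrow> 'a \<Rightarrow> bool) \<Rightarrow> 'a set \<Rightarrow> 'a set \<Rightarrow> bool" where
  "set_lt le X Y \<longleftrightarrow> (\<forall>x\<in>X. \<forall>y\<in>Y. lt le x y)"

definition antichain :: "('a \<Rightarrow> 'a \<Rightarrow> bool) \<Rightarrow> 'a set \<Rightarrow> bool" where
  "antichain le B \<longleftrightarrow> (\<forall>x\<in>B. \<forall>y\<in>B. \<not> lt le x y)"

definition width :: "'a set \<Rightarrow> ('a \<Rightarrow> 'a \<Rightarrow> bool) \<Rightarrow> nat" where
  "width A le = Max {card B | B. B \<subseteq> A \<and> antichain le B}"

definition minimals :: "'a set \<Rightarrow> ('a \<Rightarrow> 'a \<Rightarrow> bool) \<Rightarrow> 'a set" where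
  "minimals B le = {x \<in> B. \<forall>y\<in>B. le y x \<longrightarrow> y = x}"

text \<open>below A le k = P(0) \<union> ... \<union> P(k-1)\<close>
fun below :: "'a set \<Rightarrow> ('a \<Rightarrow> 'a \<Rightarrow> bool) \<Rightarrow> nat \<Rightarrow> 'a set" where
  "below A le 0 = {}"
| "below A le (Suc k) = below A le k \<union> minimals (A - below A le k) le"

definition lev :: "'a set \<Rightarrow> ('a \<Rightarrow> 'a \<Rightarrow> bool) \<Rightarrow> nat \<Rightarrow> 'a set" where
  "lev A le k = minimals (A - below A le k) le"

definition levs :: "'a set \<Rightarrow> ('a \<Rightarrow> 'a \<Rightarrow> bool) \<Rightarrow> nat \<Rightarrow> nat \<Rightarrow> 'a set" where
  "levs A le k l = (\<Union>i\<in>{k..l}. lev A le i)"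

definition height :: "'a set \<Rightarrow> ('a \<Rightarrow> 'a \<Rightarrow> bool) \<Rightarrow> nat" where
  "height A le = (GREATEST k. lev A le k \<noteq> {})"

definition section3 :: "'a set \<Rightarrow> ('a \<Rightarrow> 'a \<Rightarrow> bool) \<Rightarrow> bool" where
  "section3 A le \<longleftrightarrow> height A le \<ge> 1 \<and>
    (\<exists>c :: nat \<times> nat \<Rightarrow> 'a.
       bij_betw c ({0..height A le} \<times> {0,1,2}) A
     \<and> (\<forall>j<3. \<forall>k<height A le. lt le (c (k,j)) (c (Suc k, j)))
     \<and> (\<forall>k\<le>height A le. antichain le {c (k,0), c (k,1), c (k,2)})
     \<and> (\<forall>k\<le>height A le. \<forall>l\<le>height A le. \<forall>i<3. \<forall>j<3.
          lt le (c (k,i)) (c (l,j)) \<longrightarrow> lt le (c (k,(i+1) mod 3)) (c (l,(j+1) mod 3))))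
   \<and> (\<forall>k<height A le. \<not> set_lt le (lev A le k) (lev A le (Suc k)))"

definition is_section :: "'a set \<Rightarrow> ('a \<Rightarrow> 'a \<Rightarrow> bool) \<Rightarrow> bool" where
  "is_section A le \<longleftrightarrow> (card A = 2 \<and> antichain le A) \<or> section3 A le"

definition nice :: "'a set \<Rightarrow> ('a \<Rightarrow> 'a \<Rightarrow> bool) \<Rightarrow> bool" where
  "nice A le \<longleftrightarrow> (\<forall>x\<in>A. \<forall>y\<in>A. lt le x y \<longrightarrow>
      \<not> ({z\<in>A. lt le x z} \<subseteq> {z\<in>A. le y z}) \<and> \<not> ({z\<in>A. lt le z y} \<subseteq> {z\<in>A. le z x}))"

definition nice_tower_decomp :: "'a set \<Rightarrow> ('a \<Rightarrow> 'a \<Rightarrow> bool) \<Rightarrow> 'a set list \<Rightarrow> bool" where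
  "nice_tower_decomp A le Ss \<longleftrightarrow> A = \<Union>(set Ss)
     \<and> (\<forall>i<length Ss. \<forall>j<length Ss. i < j \<longrightarrow> set_lt le (Ss!i) (Ss!j))
     \<and> (\<forall>S\<in>set Ss. is_section S le \<and> nice S le)"

definition tower_of_nice_sections :: "'a set \<Rightarrow> ('a \<Rightarrow> 'a \<Rightarrow> bool) \<Rightarrow> bool" where
  "tower_of_nice_sections A le \<longleftrightarrow> (\<exists>Ss. nice_tower_decomp A le Ss)"

definition retract :: "'a set \<Rightarrow> ('a \<Rightarrow> 'a \<Rightarrow> bool) \<Rightarrow> 'a set \<Rightarrow> bool" where
  "retract A le R \<longleftrightarrow> (\<exists>f. (\<forall>x\<in>A. f x \<in> A) \<and> (\<forall>x\<in>A. \<forall>y\<in>A. le x y \<longrightarrow> le (f x) (f y))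
     \<and> (\<forall>x\<in>A. f (f x) = f x) \<and> R = f ` A)"

definition N2 :: "'a set \<Rightarrow> ('a \<Rightarrow> 'a \<Rightarrow> bool) \<Rightarrow> bool" where
  "N2 A le \<longleftrightarrow> section3 A le \<and> nice A le \<and> height A le \<ge> 2
     \<and> (\<forall>k l. k + 2 \<le> l \<longrightarrow> set_lt le (lev A le k) (lev A le l))"

end

theory Submission
  imports Defs
begin

definition secc :: "'a set \<Rightarrow> ('a \<Rightarrow> 'a \<Rightarrow> bool) \<Rightarrow> nat \<Rightarrow> (nat \<times> nat \<Rightarrow> 'a) \<Rightarrow> bool" where
  "secc A le h c \<longleftrightarrow> bij_betw c ({0..h} \<times> {0,1,2}) A
     \<and> (\<forall>j<3. \<forall>k<h. lt le (c (k,j)) (c (Suc k, j)))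
     \<and> (\<forall>k\<le>h. antichain le {c (k,0), c (k,1), c (k,2)})
     \<and> (\<forall>k\<le>h. \<forall>l\<le>h. \<forall>i<3. \<forall>j<3.
          lt le (c (k,i)) (c (l,j)) \<longrightarrow> lt le (c (k,(i+1) mod 3)) (c (l,(j+1) mod 3)))"

lemma lt3: "j < (3::nat) \<Longrightarrow> j = 0 \<or> j = 1 \<or> j = 2"
  by (simp add: numeral_3_eq_3 numeral_2_eq_2 less_Suc_eq)

lemma all3: "(\<forall>a<(3::nat). P a) \<longleftrightarrow> P 0 \<and> P 1 \<and> P 2"
proof
  assume "\<forall>a<(3::nat). P a" then show "P 0 \<and> P 1 \<and> P 2" by simp
next
  assume h: "P 0 \<and> P 1 \<and> P 2"
  show "\<forall>a<(3::nat). P a"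
  proof (intro allI impI)
    fix a :: nat assume "a < 3"
    then have "a = 0 \<or> a = 1 \<or> a = 2" by (rule lt3)
    then show "P a" using h by auto
  qed
qed

lemma ex3: "(\<exists>a<(3::nat). P a) \<longleftrightarrow> P 0 \<or> P 1 \<or> P 2"
  using all3[of "\<lambda>a. \<not> P a"] by auto

lemma section3_secc:
  assumes "section3 A le"
  shows "\<exists>c. secc A le (height A le) c"
  using assms unfolding section3_def secc_def by blast

lemma secc_mem:
  assumes "secc A le h c" "k \<le> h" "j < 3"
  shows "c (k,j) \<in> A"
proof -
  have "(k,j) \<in> {0..h} \<times> {0,1,2::nat}" using assms(2,3) by auto
  then show ?thesis using assms(1) unfolding secc_def bij_betw_def by blast
qed

lemma secc_inj:
  assumes "secc A le h c" "k \<le> h" "j < 3" "k' \<le> h" "j' < 3" "c (k,j) = c (k',j')"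
  shows "k = k' \<and> j = j'"
proof -
  have m1: "(k,j) \<in> {0..h} \<times> {0,1,2::nat}" using lt3[OF assms(3)] assms(2) by auto
  have m2: "(k',j') \<in> {0..h} \<times> {0,1,2::nat}" using lt3[OF assms(5)] assms(4) by auto
  have inj: "inj_on c ({0..h} \<times> {0,1,2::nat})" using assms(1) unfolding secc_def bij_betw_def by simp
  have "(k,j) = (k',j')" by (rule inj_onD[OF inj assms(6) m1 m2])
  then show ?thesis by simp
qed

lemma lt_trans:
  assumes "poset A le" "x \<in> A" "y \<in> A" "z \<in> A" "lt le x y" "lt le y z"
  shows "lt le x z"
proof -
  have tr: "le x z" using assms unfolding poset_def lt_def by blast
  have "x \<noteq> z"
  proof
    assume "x = z"
    then have "le y x" "le x y" using assms(5,6) unfolding lt_def by auto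
    then have "x = y" using assms(1-3) unfolding poset_def by blast
    then show False using assms(5) unfolding lt_def by simp
  qed
  then show ?thesis using tr unfolding lt_def by simp
qed

lemma chain_lt:
  assumes "poset A le" "secc A le h c" "j < 3" "k < l" "l \<le> h"
  shows "lt le (c (k,j)) (c (l,j))"
  using assms(4,5)
proof (induction l)
  case 0 then show ?case by simp
next
  case (Suc l)
  have st: "lt le (c (l,j)) (c (Suc l, j))"
    using assms(2,3) Suc.prems unfolding secc_def by auto
  show ?case
  proof (cases "k < l")
    case True
    then have h1: "lt le (c (k,j)) (c (l,j))" using Suc by auto
    have "c (k,j) \<in> A" "c (l,j) \<in> A" "c (Suc l,j) \<in> A"
      using secc_mem[OF assms(2)] Suc.prems assms(3) True by auto
    then show ?thesis using lt_trans[OF assms(1) _ _ _ h1 st] by auto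
  next
    case False
    then have "k = l" using Suc.prems by auto
    then show ?thesis using st by simp
  qed
qed

lemma row_lt:
  assumes "poset A le" "secc A le h c" "a \<le> h" "b \<le> h" "j < 3" "j' < 3"
    "lt le (c (a,j)) (c (b,j'))"
  shows "a < b"
proof (rule ccontr)
  assume "\<not> a < b"
  then consider "a = b" | "b < a" by linarith
  then show False
  proof cases
    case 1
    have "antichain le {c (b,0), c (b,1), c (b,2)}" using assms(2,4) unfolding secc_def by auto
    moreover have "c (a,j) \<in> {c (b,0), c (b,1), c (b,2)}" "c (b,j') \<in> {c (b,0), c (b,1), c (b,2)}"
      using 1 lt3[OF assms(5)] lt3[OF assms(6)] by auto
    ultimately show False using assms(7) unfolding antichain_def by blast
  next
    case 2
    have ch: "lt le (c (b,j)) (c (a,j))" using chain_lt[OF assms(1,2,5) 2 assms(3)] .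
    have m: "c (b,j) \<in> A" "c (a,j) \<in> A" "c (b,j') \<in> A"
      using secc_mem[OF assms(2)] assms by auto
    show False
    proof (cases "j = j'")
      case True
      then show False using ch assms(1,7) m unfolding poset_def lt_def by metis
    next
      case False
      have "lt le (c (b,j)) (c (b,j'))" using lt_trans[OF assms(1) m ch assms(7)] .
      moreover have "antichain le {c (b,0), c (b,1), c (b,2)}" using assms(2,4) unfolding secc_def by auto
      moreover have "c (b,j) \<in> {c (b,0), c (b,1), c (b,2)}" "c (b,j') \<in> {c (b,0), c (b,1), c (b,2)}"
        using lt3[OF assms(5)] lt3[OF assms(6)] by auto
      ultimately show False unfolding antichain_def by blast
    qed
  qed
qed

lemma below_secc:
  assumes "poset A le" "secc A le h c" "i \<le> Suc h"
  shows "below A le i = c ` ({0..<i} \<times> {0,1,2})"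
  using assms(3)
proof (induction i)
  case 0 then show ?case by simp
next
  case (Suc i)
  have IH: "below A le i = c ` ({0..<i} \<times> {0,1,2})" using Suc by auto
  have bij: "bij_betw c ({0..h} \<times> {0,1,2}) A" using assms(2) unfolding secc_def by auto
  have sub: "{0..<i} \<times> {0,1,2::nat} \<subseteq> {0..h} \<times> {0,1,2}" using Suc.prems by auto
  have "A - below A le i = c ` ({0..h} \<times> {0,1,2} - {0..<i} \<times> {0,1,2})"
  proof -
    have Aeq: "A = c ` ({0..h} \<times> {0,1,2})" using bij unfolding bij_betw_def by simp
    have inj: "inj_on c ({0..h} \<times> {0,1,2::nat})" using bij unfolding bij_betw_def by simp
    have "c ` ({0..h} \<times> {0,1,2} - {0..<i} \<times> {0,1,2}) = c ` ({0..h} \<times> {0,1,2}) - c ` ({0..<i} \<times> {0,1,2})"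
      by (rule inj_on_image_set_diff[OF inj]) (use sub in auto)
    then show ?thesis using Aeq IH by simp
  qed
  also have "{0..h} \<times> {0,1,2::nat} - {0..<i} \<times> {0,1,2} = {i..h} \<times> {0,1,2}" by auto
  finally have D: "A - below A le i = c ` ({i..h} \<times> {0,1,2})" .
  have eqm: "minimals (A - below A le i) le = c ` ({i} \<times> {0,1,2})"
  proof
    show "minimals (A - below A le i) le \<subseteq> c ` ({i} \<times> {0,1,2})"
    proof
      fix x assume x: "x \<in> minimals (A - below A le i) le"
      then have "x \<in> c ` ({i..h} \<times> {0,1,2})" using D unfolding minimals_def by blast
      then obtain a j where aj: "a \<in> {i..h}" "j \<in> {0,1,2::nat}" "x = c (a,j)"
        by blast
      show "x \<in> c ` ({i} \<times> {0,1,2})"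
      proof (cases "a = i")
        case True then show ?thesis using aj by auto
      next
        case False
        then have "i < a" using aj by auto
        then have lt1: "lt le (c (i,j)) (c (a,j))" using chain_lt[OF assms(1,2)] aj by auto
        have "c (i,j) \<in> A - below A le i" unfolding D using aj by auto
        then show ?thesis using x lt1 aj unfolding minimals_def lt_def by auto
      qed
    qed
  next
    show "c ` ({i} \<times> {0,1,2}) \<subseteq> minimals (A - below A le i) le"
    proof
      fix x assume "x \<in> c ` ({i} \<times> {0,1,2})"
      then obtain j where j: "j \<in> {0,1,2::nat}" "x = c (i,j)" by auto
      have xin: "x \<in> A - below A le i" unfolding D using j Suc.prems by auto
      have "\<forall>y \<in> A - below A le i. le y x \<longrightarrow> y = x"
      proof (intro ballI impI)
        fix y assume y: "y \<in> A - below A le i" "le y x"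
        then have "y \<in> c ` ({i..h} \<times> {0,1,2})" using D by blast
        then obtain b j' where bj: "b \<in> {i..h}" "j' \<in> {0,1,2::nat}" "y = c (b,j')"
          by blast
        show "y = x"
        proof (rule ccontr)
          assume "y \<noteq> x"
          then have ltb: "lt le (c (b,j')) (c (i,j))" using y bj j unfolding lt_def by auto
          have j3: "j' < 3" "j < 3" using bj(2) j(1) by auto
          have "b \<le> h" "i \<le> h" using bj(1) Suc.prems by auto
          then have "b < i" using row_lt[OF assms(1,2) _ _ j3 ltb] by blast
          then show False using bj by auto
        qed
      qed
      then show "x \<in> minimals (A - below A le i) le" using xin unfolding minimals_def by auto
    qed
  qed
  have "below A le (Suc i) = below A le i \<union> minimals (A - below A le i) le" by simp
  also have "\<dots> = c ` ({0..<i} \<times> {0,1,2}) \<union> c ` ({i} \<times> {0,1,2})"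
    using IH eqm by simp
  also have "\<dots> = c ` ({0..<i} \<times> {0,1,2} \<union> {i} \<times> {0,1,2})" by (rule image_Un[symmetric])
  also have "\<dots> = c ` ({0..<Suc i} \<times> {0,1,2})"
    by (rule arg_cong[where f="image c"]) auto
  finally show ?case .
qed

lemma lev_secc:
  assumes "poset A le" "secc A le h c" "i \<le> h"
  shows "lev A le i = {c (i,0), c (i,1), c (i,2)}"
proof -
  have "below A le (Suc i) = c ` ({0..<Suc i} \<times> {0,1,2})"
    by (rule below_secc[OF assms(1,2)]) (use assms(3) in auto)
  moreover have "below A le i = c ` ({0..<i} \<times> {0,1,2})"
    by (rule below_secc[OF assms(1,2)]) (use assms(3) in auto)
  moreover have "lev A le i \<inter> below A le i = {}"
    unfolding lev_def minimals_def by auto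
  moreover have "below A le (Suc i) = below A le i \<union> lev A le i"
    unfolding lev_def by simp
  moreover have "c ` ({0..<Suc i} \<times> {0,1,2}) - c ` ({0..<i} \<times> {0,1,2}) = c ` ({i} \<times> {0,1,2})"
  proof -
    have bij: "inj_on c ({0..h} \<times> {0,1,2})" using assms(2) unfolding secc_def bij_betw_def by auto
    have "c ` ({0..<Suc i} \<times> {0,1,2}) - c ` ({0..<i} \<times> {0,1,2}) =
          c ` ({0..<Suc i} \<times> {0,1,2} - {0..<i} \<times> {0,1,2})"
      by (rule inj_on_image_set_diff[OF bij, symmetric]) (use assms(3) in auto)
    also have "{0..<Suc i} \<times> {0,1,2::nat} - {0..<i} \<times> {0,1,2} = {i} \<times> {0,1,2}" by auto
    finally show ?thesis .
  qed
  ultimately show ?thesis by auto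
qed

lemma mods3: "(0+1) mod 3 = (1::nat)" "(1+1) mod 3 = (2::nat)" "(2+1) mod 3 = (0::nat)"
  by simp_all

lemma pattern:
  fixes Q :: "nat \<Rightarrow> nat \<Rightarrow> bool" and H :: "nat \<Rightarrow> bool"
  assumes "\<forall>a<3. Q a a"
    "\<forall>a<3. \<forall>b<3. Q a b \<longrightarrow> Q ((a+1) mod 3) ((b+1) mod 3)"
    "\<forall>a<3. \<forall>b<3. \<not> H a \<and> H b \<longrightarrow> Q a b"
    "\<exists>a<3. H a" "\<exists>a<3. \<not> H a"
  shows "\<forall>a<3. \<forall>b<3. Q a b"
  using assms unfolding all3 ex3 mods3 by blast


lemma poset_subset: "poset A le \<Longrightarrow> B \<subseteq> A \<Longrightarrow> poset B le"
  unfolding poset_def by blast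

lemma card3_le: "card {x, y, z} \<le> 3"
  by (simp add: card_insert_if)

theorem corollary5p1:
  fixes P R S :: "'a set" and le :: "'a \<Rightarrow> 'a \<Rightarrow> bool" and Ss :: "'a set list"
  assumes "finite P" and "poset P le" and "N2 P le"
    and "retract P le R" and "width R le = 3" and "tower_of_nice_sections R le"
    and "nice_tower_decomp R le Ss" and "S \<in> set Ss"
    and "section3 S le" and "nice S le"
  shows "\<exists>k l. k < l \<and> l \<le> height P le \<and> S = levs P le k l"
proof -
  define hP where "hP = height P le"
  define m where "m = height S le"
  have posP: "poset P le" by fact
  have N2: "N2 P le" by fact
  obtain cP where cP: "secc P le hP cP"
    using section3_secc N2 unfolding N2_def hP_def by blast
  have hor: "\<And>k l. k + 2 \<le> l \<Longrightarrow> set_lt le (lev P le k) (lev P le l)"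
    using N2 unfolding N2_def by blast
  have "R \<subseteq> P" using assms(4) unfolding retract_def by auto
  moreover have "S \<subseteq> R" using assms(7,8) unfolding nice_tower_decomp_def by auto
  ultimately have SP: "S \<subseteq> P" by auto
  have posS: "poset S le" using poset_subset[OF posP SP] .
  obtain d where d: "secc S le m d"
    using section3_secc assms(9) unfolding m_def by blast
  have m1: "1 \<le> m" using assms(9) unfolding section3_def m_def by auto
  have noncomp: "\<And>k. k < m \<Longrightarrow> \<not> set_lt le (lev S le k) (lev S le (Suc k))"
    using assms(9) unfolding section3_def m_def by blast
  have levS: "\<And>i. i \<le> m \<Longrightarrow> lev S le i = {d (i,0), d (i,1), d (i,2)}"
    using lev_secc[OF posS d] by blast
  have levP: "\<And>i. i \<le> hP \<Longrightarrow> lev P le i = {cP (i,0), cP (i,1), cP (i,2)}"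
    using lev_secc[OF posP cP] by blast
  have Pimg: "P = cP ` ({0..hP} \<times> {0,1,2})"
    using cP unfolding secc_def bij_betw_def by auto
  have Simg: "S = d ` ({0..m} \<times> {0,1,2})"
    using d unfolding secc_def bij_betw_def by auto
  have "\<forall>p\<in>{0..m} \<times> {0,1,2::nat}. \<exists>q. q \<in> {0..hP} \<times> {0,1,2::nat} \<and> d p = cP q"
  proof
    fix p assume "p \<in> {0..m} \<times> {0,1,2::nat}"
    then have "d p \<in> d ` ({0..m} \<times> {0,1,2::nat})" by (rule imageI)
    then have "d p \<in> P" using Simg SP by blast
    then have "d p \<in> cP ` ({0..hP} \<times> {0,1,2::nat})" using Pimg by simp
    then show "\<exists>q. q \<in> {0..hP} \<times> {0,1,2::nat} \<and> d p = cP q" by blast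
  qed
  from bchoice[OF this] obtain g where g: "\<forall>p\<in>{0..m} \<times> {0,1,2::nat}. g p \<in> {0..hP} \<times> {0,1,2::nat} \<and> d p = cP (g p)"
    by blast
  define rho where "rho i j = fst (g (i,j))" for i j
  define tau where "tau i j = snd (g (i,j))" for i j
  have rt: "rho i j \<le> hP \<and> tau i j < 3 \<and> d (i,j) = cP (rho i j, tau i j)" if "i \<le> m" "j < 3" for i j
  proof -
    have "(i,j) \<in> {0..m} \<times> {0,1,2::nat}" using that lt3[OF that(2)] by auto
    then have "g (i,j) \<in> {0..hP} \<times> {0,1,2::nat} \<and> d (i,j) = cP (g (i,j))" using g by blast
    then show ?thesis unfolding rho_def tau_def by (cases "g (i,j)") auto
  qed
  have Flt: "rho i j < rho i' j'"
    if "i \<le> m" "i' \<le> m" "j < 3" "j' < 3" "lt le (d (i,j)) (d (i',j'))" for i i' j j'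
    using row_lt[OF posP cP, of "rho i j" "rho i' j'" "tau i j" "tau i' j'"] rt[OF that(1,3)] rt[OF that(2,4)] that(5)
    by auto
  have Fhor: "lt le (d (i,j)) (d (i',j'))"
    if "i \<le> m" "i' \<le> m" "j < 3" "j' < 3" "rho i j + 2 \<le> rho i' j'" for i i' j j'
  proof -
    have "set_lt le (lev P le (rho i j)) (lev P le (rho i' j'))" using hor that(5) by blast
    moreover have "d (i,j) \<in> lev P le (rho i j)"
      using levP rt[OF that(1,3)] lt3[OF conjunct1[OF conjunct2[OF rt[OF that(1,3)]]]] by auto
    moreover have "d (i',j') \<in> lev P le (rho i' j')"
      using levP rt[OF that(2,4)] lt3[OF conjunct1[OF conjunct2[OF rt[OF that(2,4)]]]] by auto
    ultimately show ?thesis unfolding set_lt_def by blast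
  qed
  have nofull: False if "p < m" "\<forall>a<3. \<forall>b<3. lt le (d (p,a)) (d (Suc p,b))" for p
  proof -
    have e1: "lev S le p = {d (p,0), d (p,1), d (p,2)}" using levS that(1) by auto
    have e2: "lev S le (Suc p) = {d (Suc p,0), d (Suc p,1), d (Suc p,2)}" using levS that(1) by auto
    have "set_lt le (lev S le p) (lev S le (Suc p))"
      unfolding e1 e2 set_lt_def using that(2) unfolding all3 by auto
    then show False using noncomp that(1) by blast
  qed
  have chainS: "lt le (d (p,a)) (d (Suc p,a))" if "p < m" "a < 3" for p a
    using d that unfolding secc_def by blast
  have cycS: "\<forall>a<3. \<forall>b<3. lt le (d (p,a)) (d (Suc p,b)) \<longrightarrow> lt le (d (p,(a+1) mod 3)) (d (Suc p,(b+1) mod 3))"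
    if "p < m" for p
  proof -
    have cyc: "\<forall>k\<le>m. \<forall>l\<le>m. \<forall>i<3. \<forall>j<3. lt le (d (k,i)) (d (l,j)) \<longrightarrow> lt le (d (k,(i+1) mod 3)) (d (l,(j+1) mod 3))"
      using d unfolding secc_def by blast
    show ?thesis using cyc[rule_format, of p "Suc p"] that by auto
  qed
  have claim1: "rho i 1 = rho i 0 \<and> rho i 2 = rho i 0" if "i \<le> m" for i
  proof (rule ccontr)
    assume ne: "\<not> (rho i 1 = rho i 0 \<and> rho i 2 = rho i 0)"
    define r where "r = min (min (rho i 0) (rho i 1)) (rho i 2)"
    define H where "H b = (r < rho i b)" for b
    have exH: "\<exists>a<3. H a" using ne unfolding ex3 H_def r_def by auto
    have exnH: "\<exists>a<3. \<not> H a" unfolding ex3 H_def r_def by auto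
    have rle: "r \<le> rho i a" if "a < 3" for a using lt3[OF that] unfolding r_def by auto
    show False
    proof (cases "i < m")
      case True
      have "\<forall>a<3. \<forall>b<3. lt le (d (i,a)) (d (Suc i,b))"
      proof (rule pattern[where H=H])
        show "\<forall>a<3. lt le (d (i,a)) (d (Suc i,a))" using chainS True by blast
        show "\<forall>a<3. \<forall>b<3. lt le (d (i,a)) (d (Suc i,b)) \<longrightarrow> lt le (d (i,(a+1) mod 3)) (d (Suc i,(b+1) mod 3))"
          using cycS True by blast
        show "\<forall>a<3. \<forall>b<3. \<not> H a \<and> H b \<longrightarrow> lt le (d (i,a)) (d (Suc i,b))"
        proof (intro allI impI)
          fix a b assume ab: "a < 3" "b < 3" "\<not> H a \<and> H b"
          have "rho i b < rho (Suc i) b" using Flt[OF that _ ab(2) ab(2) chainS[OF True ab(2)]] True by auto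
          moreover have "rho i a = r" using ab rle[OF ab(1)] unfolding H_def by auto
          moreover have "r < rho i b" using ab unfolding H_def by auto
          ultimately have "rho i a + 2 \<le> rho (Suc i) b" by auto
          then show "lt le (d (i,a)) (d (Suc i,b))" using Fhor[OF that _ ab(1,2)] True by auto
        qed
      qed (use exH exnH in auto)
      then show False using nofull True by blast
    next
      case False
      then have im: "i = m" using that by auto
      define p where "p = m - 1"
      have pm: "p < m" "Suc p = m" using m1 unfolding p_def by auto
      have "\<forall>a<3. \<forall>b<3. lt le (d (p,a)) (d (Suc p,b))"
      proof (rule pattern[where H=H])
        show "\<forall>a<3. lt le (d (p,a)) (d (Suc p,a))" using chainS pm by blast
        show "\<forall>a<3. \<forall>b<3. lt le (d (p,a)) (d (Suc p,b)) \<longrightarrow> lt le (d (p,(a+1) mod 3)) (d (Suc p,(b+1) mod 3))"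
          using cycS pm by blast
        show "\<forall>a<3. \<forall>b<3. \<not> H a \<and> H b \<longrightarrow> lt le (d (p,a)) (d (Suc p,b))"
        proof (intro allI impI)
          fix a b assume ab: "a < 3" "b < 3" "\<not> H a \<and> H b"
          have "rho p a < rho (Suc p) a" using Flt[OF _ _ ab(1) ab(1) chainS[OF pm(1) ab(1)]] pm by auto
          moreover have "rho i a = r" using ab rle[OF ab(1)] unfolding H_def by auto
          moreover have "r < rho i b" using ab unfolding H_def by auto
          ultimately have "rho p a + 2 \<le> rho (Suc p) b" using im pm by auto
          then show "lt le (d (p,a)) (d (Suc p,b))" using Fhor[OF _ _ ab(1,2)] pm by auto
        qed
      qed (use exH exnH in auto)
      then show False using nofull pm by blast
    qed
  qed
  have rowc: "rho i a = rho i 0" if "i \<le> m" "a < 3" for i a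
    using claim1[OF that(1)] lt3[OF that(2)] by auto
  have claim2: "rho (Suc i) 0 = Suc (rho i 0)" if "i < m" for i
  proof (rule ccontr)
    assume ne: "rho (Suc i) 0 \<noteq> Suc (rho i 0)"
    have "rho i 0 < rho (Suc i) 0" using Flt[OF _ _ _ _ chainS[OF that]] that by auto
    then have le2: "rho i 0 + 2 \<le> rho (Suc i) 0" using ne by auto
    have "\<forall>a<3. \<forall>b<3. lt le (d (i,a)) (d (Suc i,b))"
    proof (intro allI impI)
      fix a b assume ab: "a < (3::nat)" "b < (3::nat)"
      have "rho i a + 2 \<le> rho (Suc i) b" using le2 rowc[of i a] rowc[of "Suc i" b] ab that by auto
      then show "lt le (d (i,a)) (d (Suc i,b))" using Fhor[OF _ _ ab] that by auto
    qed
    then show False using nofull that by blast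
  qed
  define k where "k = rho 0 0"
  have claim3: "i \<le> m \<Longrightarrow> rho i 0 = k + i" for i
  proof (induction i)
    case 0 then show ?case unfolding k_def by simp
  next
    case (Suc i) then show ?case using claim2[of i] by auto
  qed
  define l where "l = k + m"
  have lh: "l \<le> hP" using rt[of m 0] claim3[of m] unfolding l_def by auto
  have roweq: "{d (i,0), d (i,1), d (i,2)} = {cP (k+i,0), cP (k+i,1), cP (k+i,2)}" if "i \<le> m" for i
  proof (rule card_seteq)
    show "finite {cP (k+i,0), cP (k+i,1), cP (k+i,2)}" by simp
    show "{d (i,0), d (i,1), d (i,2)} \<subseteq> {cP (k+i,0), cP (k+i,1), cP (k+i,2)}"
    proof
      fix x assume "x \<in> {d (i,0), d (i,1), d (i,2)}"
      then have "\<exists>j<3. x = d (i,j)" unfolding ex3 by auto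
      then obtain j where j: "j < 3" "x = d (i,j)" by blast
      have "x = cP (k + i, tau i j)" using rt[OF that j(1)] rowc[OF that j(1)] claim3[OF that] j by auto
      then show "x \<in> {cP (k+i,0), cP (k+i,1), cP (k+i,2)}"
        using lt3[OF conjunct1[OF conjunct2[OF rt[OF that j(1)]]]] by auto
    qed
    have "d (i,0) \<noteq> d (i,1)" using secc_inj[OF d that, of 0 i 1] that by auto
    moreover have "d (i,0) \<noteq> d (i,2)" using secc_inj[OF d that, of 0 i 2] that by auto
    moreover have "d (i,1) \<noteq> d (i,2)" using secc_inj[OF d that, of 1 i 2] that by auto
    ultimately have "card {d (i,0), d (i,1), d (i,2)} = 3" by simp
    then show "card {cP (k+i,0), cP (k+i,1), cP (k+i,2)} \<le> card {d (i,0), d (i,1), d (i,2)}"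
      using card3_le[of "cP (k+i,0)" "cP (k+i,1)" "cP (k+i,2)"] by simp
  qed
  have Srows: "S = (\<Union>i\<in>{0..m}. {d (i,0), d (i,1), d (i,2)})"
    unfolding Simg by auto
  have levsrows: "levs P le k l = (\<Union>t\<in>{k..l}. {cP (t,0), cP (t,1), cP (t,2)})"
    unfolding levs_def using levP lh by auto
  have "S = levs P le k l"
  proof
    show "S \<subseteq> levs P le k l"
    proof
      fix x assume "x \<in> S"
      then obtain i where i: "i \<in> {0..m}" "x \<in> {d (i,0), d (i,1), d (i,2)}" using Srows by auto
      then have "x \<in> {cP (k+i,0), cP (k+i,1), cP (k+i,2)}" using roweq by auto
      moreover have "k + i \<in> {k..l}" using i unfolding l_def by auto
      ultimately show "x \<in> levs P le k l" unfolding levsrows by blast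
    qed
  next
    show "levs P le k l \<subseteq> S"
    proof
      fix x assume "x \<in> levs P le k l"
      then obtain t where t: "t \<in> {k..l}" "x \<in> {cP (t,0), cP (t,1), cP (t,2)}" unfolding levsrows by auto
      define i where "i = t - k"
      have ti: "t = k + i" "i \<le> m" using t unfolding i_def l_def by auto
      then have "x \<in> {d (i,0), d (i,1), d (i,2)}" using roweq t by auto
      then show "x \<in> S" using Srows ti by auto
    qed
  qed
  moreover have "k < l" using m1 unfolding l_def by auto
  ultimately show ?thesis using lh unfolding hP_def by blast
qed

end
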